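(* Let $d\ge 3$, $z\in(-1,1)$ and $\xi\in\mathbb S^{d-1}$. Then $$h_z^{-1}\bigl(\mathscr C_z^{\xi}\bigr)=\mathscr C_0^{\,g_z(\xi)}.$$
   Context: $\mathbb S^{d-1}=\{\xi\in\mathbb R^d:\|\xi\|=1\}$, and $\epsilon^1,\dots,\epsilon^d$ is the standard basis of $\mathbb R^d$. For $z\in(-1,1)$ and $\xi\in\mathbb S^{d-1}$ set $\mathscr C_z^{\xi}=\{\eta\in\mathbb S^{d-1}:\langle\eta,\xi\rangle=z\xi_d\}$. The maps $h_z,g_z:\mathbb S^{d-1}\to\mathbb S^{d-1}$ are $$h_z(\eta)=\sum_{i=1}^{d-1}\frac{\sqrt{1-z^2}}{1+z\eta_d}\,\eta_i\,\epsilon^i+\frac{z+\eta_d}{1+z\eta_d}\,\epsilon^d,$$ $$g_z(\xi)=\frac{1}{\sqrt{1-z^2\xi_d^2}}\Bigl(\sum_{i=1}^{d-1}\xi_i\,\epsilon^i+\sqrt{1-z^2}\,\xi_d\,\epsilon^d\Bigr).$$ The map $h_z$ is a bijection of $\mathbb S^{d-1}$. *)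

theory Defs
  imports Complex_Main
begin

text \<open>Vectors of R^d are represented as functions nat => real supported on the
index set {1..d}; coordinate i is x i, and epsilon^i is the i-th unit vector.\<close>

definition vecs :: "nat \<Rightarrow> (nat \<Rightarrow> real) set" where
  "vecs d = {x. \<forall>i. i \<notin> {1..d} \<longrightarrow> x i = 0}"

definition inner_d :: "nat \<Rightarrow> (nat \<Rightarrow> real) \<Rightarrow> (nat \<Rightarrow> real) \<Rightarrow> real" where
  "inner_d d x y = (\<Sum>i=1..d. x i * y i)"

definition sphere_d :: "nat \<Rightarrow> (nat \<Rightarrow> real) set" where
  "sphere_d d = {x \<in> vecs d. sqrt (inner_d d x x) = 1}"

definition capC :: "nat \<Rightarrow> real \<Rightarrow> (nat \<Rightarrow> real) \<Rightarrow> (nat \<Rightarrow> real) set" where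
  "capC d z \<xi> = {\<eta> \<in> sphere_d d. inner_d d \<eta> \<xi> = z * \<xi> d}"

definition hmap :: "nat \<Rightarrow> real \<Rightarrow> (nat \<Rightarrow> real) \<Rightarrow> (nat \<Rightarrow> real)" where
  "hmap d z \<eta> = (\<lambda>i. if 1 \<le> i \<and> i < d then sqrt (1 - z\<^sup>2) / (1 + z * \<eta> d) * \<eta> i
                      else if i = d then (z + \<eta> d) / (1 + z * \<eta> d) else 0)"

definition gmap :: "nat \<Rightarrow> real \<Rightarrow> (nat \<Rightarrow> real) \<Rightarrow> (nat \<Rightarrow> real)" where
  "gmap d z \<xi> = (\<lambda>i. (1 / sqrt (1 - z\<^sup>2 * (\<xi> d)\<^sup>2)) *
                      (if 1 \<le> i \<and> i < d then \<xi> i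
                       else if i = d then sqrt (1 - z\<^sup>2) * \<xi> d else 0))"

end

theory Submission
  imports Defs
begin

lemma inner_split:
  assumes "d \<ge> 1"
  shows "inner_d d x y = (\<Sum>i\<in>{1..<d}. x i * y i) + x d * y d"
proof -
  have "{1..d} = insert d {1..<d}" using assms by auto
  then show ?thesis unfolding inner_d_def by (simp add: add.commute)
qed

lemma sq_le1:
  assumes "d \<ge> 1" "x \<in> sphere_d d"
  shows "(x d)^2 \<le> 1" "(\<Sum>i\<in>{1..<d}. x i * x i) + x d * x d = 1"
proof -
  have "inner_d d x x = 1" using assms(2) unfolding sphere_d_def
    by (simp add: real_sqrt_eq_1_iff)
  then show e: "(\<Sum>i\<in>{1..<d}. x i * x i) + x d * x d = 1" using inner_split[OF assms(1)] by simp
  have "(\<Sum>i\<in>{1..<d}. x i * x i) \<ge> 0" by (intro sum_nonneg) simp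
  then show "(x d)^2 \<le> 1" using e by (simp add: power2_eq_square)
qed

theorem mainTheorem1:
  fixes d :: nat and z :: real and \<xi> :: "nat \<Rightarrow> real"
  assumes "d \<ge> 3" and "-1 < z" and "z < 1" and "\<xi> \<in> sphere_d d"
  shows "{\<eta> \<in> sphere_d d. hmap d z \<eta> \<in> capC d z \<xi>} = capC d 0 (gmap d z \<xi>)"
proof -
  have d1: "d \<ge> 1" using assms by simp
  define s where "s = sqrt (1 - z^2)"
  have z2: "z^2 < 1" using assms by (simp add: abs_square_less_1)
  have s0: "s > 0" unfolding s_def using z2 by simp
  have ss: "s * s = 1 - z^2" unfolding s_def using z2 by (simp flip: power2_eq_square)
  define N where "N = sqrt (1 - z^2 * (\<xi> d)^2)"
  have xd: "(\<xi> d)^2 \<le> 1" using sq_le1[OF d1 assms(4)] by simp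
  have "z^2 * (\<xi> d)^2 < 1"
  proof -
    have "z^2 * (\<xi> d)^2 \<le> z^2" using xd mult_left_le[of "(\<xi> d)^2" "z^2"] by simp
    then show ?thesis using z2 by simp
  qed
  then have N0: "N > 0" unfolding N_def by simp
  have key: "hmap d z \<eta> \<in> capC d z \<xi> \<longleftrightarrow> inner_d d \<eta> (gmap d z \<xi>) = 0"
    if eta: "\<eta> \<in> sphere_d d" for \<eta>
  proof -
    define D where "D = 1 + z * \<eta> d"
    have ed: "(\<eta> d)^2 \<le> 1" using sq_le1[OF d1 eta] by simp
    have "\<bar>z * \<eta> d\<bar> < 1"
    proof -
      have "\<bar>\<eta> d\<bar> \<le> 1" using ed by (simp add: abs_square_le_1)
      moreover have "\<bar>z\<bar> < 1" using assms by simp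
      ultimately show ?thesis by (simp add: abs_mult mult_le_one)
         (smt (verit) abs_ge_zero mult_left_le mult_strict_right_mono)
    qed
    then have D0: "D > 0" unfolding D_def by simp
    define A where "A = (\<Sum>i\<in>{1..<d}. \<eta> i * \<xi> i)"
    define Q where "Q = (\<Sum>i\<in>{1..<d}. \<eta> i * \<eta> i)"
    have QE: "Q + \<eta> d * \<eta> d = 1" using sq_le1[OF d1 eta] unfolding Q_def by simp
    have hd: "hmap d z \<eta> d = (z + \<eta> d) / D" using d1 unfolding hmap_def D_def by simp
    have hi: "hmap d z \<eta> i = s / D * \<eta> i" if "i \<in> {1..<d}" for i
      using that unfolding hmap_def D_def s_def by auto
    have gd: "gmap d z \<xi> d = 1 / N * (s * \<xi> d)" unfolding gmap_def N_def s_def by simp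
    have gi: "gmap d z \<xi> i = 1 / N * \<xi> i" if "i \<in> {1..<d}" for i
      using that unfolding gmap_def N_def by auto
    have hv: "hmap d z \<eta> \<in> vecs d" using d1 unfolding vecs_def hmap_def by auto
    have hh: "inner_d d (hmap d z \<eta>) (hmap d z \<eta>) = (s*s) / (D*D) * Q + ((z + \<eta> d)/D)^2"
    proof -
      have "(\<Sum>i\<in>{1..<d}. hmap d z \<eta> i * hmap d z \<eta> i) = (s*s) / (D*D) * Q"
        unfolding Q_def sum_distrib_left by (rule sum.cong) (auto simp: hi)
      then show ?thesis unfolding inner_split[OF d1] hd by (simp add: power2_eq_square)
    qed
    have "(s*s) / (D*D) * Q + ((z + \<eta> d)/D)^2 = ((1 - z^2) * Q + (z + \<eta> d)^2) / (D*D)"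
    proof -
      have "(s*s) / (D*D) * Q = (1 - z^2) * Q / (D*D)" using ss by simp
      moreover have "((z + \<eta> d)/D)^2 = (z + \<eta> d)^2 / (D*D)" by (simp only: power2_eq_square times_divide_times_eq)
      ultimately show ?thesis by (metis add_divide_distrib)
    qed
    also have "(1 - z^2) * Q + (z + \<eta> d)^2 = D * D"
    proof -
      have Qd: "Q = 1 - \<eta> d * \<eta> d" using QE by simp
      show ?thesis by (subst Qd) (simp add: D_def algebra_simps power2_eq_square)
    qed
    finally have "inner_d d (hmap d z \<eta>) (hmap d z \<eta>) = 1" using hh D0 by simp
    then have hs: "hmap d z \<eta> \<in> sphere_d d" using hv unfolding sphere_d_def by simp
    have hx: "inner_d d (hmap d z \<eta>) \<xi> = s / D * A + (z + \<eta> d) / D * \<xi> d"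
    proof -
      have "(\<Sum>i\<in>{1..<d}. hmap d z \<eta> i * \<xi> i) = s / D * A"
        unfolding A_def sum_distrib_left by (rule sum.cong) (auto simp: hi)
      then show ?thesis unfolding inner_split[OF d1] hd by simp
    qed
    have eg: "inner_d d \<eta> (gmap d z \<xi>) = 1 / N * (A + s * \<eta> d * \<xi> d)"
    proof -
      have "(\<Sum>i\<in>{1..<d}. \<eta> i * gmap d z \<xi> i) = 1 / N * A"
        unfolding A_def sum_distrib_left by (rule sum.cong) (auto simp: gi)
      then show ?thesis unfolding inner_split[OF d1] gd by (simp add: distrib_left)
    qed
    have "inner_d d (hmap d z \<eta>) \<xi> = z * \<xi> d \<longleftrightarrow> s * A + (z + \<eta> d) * \<xi> d = z * \<xi> d * D"
    proof -
      have "inner_d d (hmap d z \<eta>) \<xi> = (s * A + (z + \<eta> d) * \<xi> d) / D"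
        using hx by (simp add: add_divide_distrib distrib_right)
      then show ?thesis using D0 by (simp add: divide_eq_eq mult.commute)
    qed
    also have "\<dots> \<longleftrightarrow> s * (A + s * \<eta> d * \<xi> d) = 0"
    proof -
      have e1: "s * (A + s * \<eta> d * \<xi> d) = s * A + (s * s) * \<eta> d * \<xi> d" by (simp add: algebra_simps)
      have e2: "s * A + (z + \<eta> d) * \<xi> d - z * \<xi> d * D = s * A + (1 - z^2) * \<eta> d * \<xi> d"
        unfolding D_def by (simp add: algebra_simps power2_eq_square)
      show ?thesis using e1 e2 unfolding ss by (metis eq_iff_diff_eq_0)
    qed
    also have "\<dots> \<longleftrightarrow> inner_d d \<eta> (gmap d z \<xi>) = 0"
      using s0 N0 eg by simp
    finally show ?thesis using hs unfolding capC_def by simp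
  qed
  show ?thesis unfolding capC_def[of d 0] using key by auto
qed

end
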